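(* Let $\lambda_1,\lambda_2,\sigma_1,\sigma_2\in\mathbb{C}^*$ and $\eta_1,\eta_2\in\mathbb{C}$ with $\lambda_1\neq\lambda_2$. Then the $\mathcal{G}$-submodule of $\Omega(\lambda_1,\eta_1,\sigma_1,0)\otimes\Omega(\lambda_2,\eta_2,0,\sigma_2)$ generated by $1\otimes 1$ is the whole module $\Omega(\lambda_1,\eta_1,\sigma_1,0)\otimes\Omega(\lambda_2,\eta_2,0,\sigma_2)$.
   Context: The planar Galilean conformal algebra $\mathcal{G}$ is the complex Lie algebra with basis $\{L_m,H_m,I_m,J_m\mid m\in\mathbb{Z}\}$ and brackets $[L_m,L_n]=(n-m)L_{m+n}$, $[L_m,H_n]=nH_{m+n}$, $[L_m,I_n]=(n-m)I_{m+n}$, $[L_m,J_n]=(n-m)J_{m+n}$, $[H_m,I_n]=I_{m+n}$, $[H_m,J_n]=-J_{m+n}$, and $[H_m,H_n]=[I_m,I_n]=[J_m,J_n]=[I_m,J_n]=0$ for all $m,n\in\mathbb{Z}$. For $\lambda,\sigma\in\mathbb{C}^*$, $\eta\in\mathbb{C}$, the module $\Omega(\lambda,\eta,\sigma,0)$ is $\mathbb{C}[X,Y]$ with $L_m f(X,Y)=\lambda^m(Y-mX+m\eta)f(X,Y-m)$, $H_m f(X,Y)=\lambda^m X f(X,Y-m)$, $I_m f(X,Y)=\lambda^m\sigma f(X-1,Y-m)$, $J_m f(X,Y)=0$. The module $\Omega(\lambda,\eta,0,\sigma)$ is $\mathbb{C}[S,T]$ with $L_m f(S,T)=\lambda^m(T+mS+m\eta)f(S,T-m)$,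 $H_m f(S,T)=\lambda^m S f(S,T-m)$, $I_m f(S,T)=0$, $J_m f(S,T)=\lambda^m\sigma f(S+1,T-m)$. The tensor product of $\mathcal{G}$-modules has action $x(v\otimes w)=xv\otimes w+v\otimes xw$. *)

theory Defs
  imports Complex_Main
begin

text \<open>Elements of the tensor product C[X,Y] (x) C[S,T] are identified with polynomials
  in C[X,Y,S,T] (f (x) g corresponds to f*g), represented as polynomial functions
  of four complex variables X Y S T (argument order).\<close>

type_synonym pfun4 = "complex \<Rightarrow> complex \<Rightarrow> complex \<Rightarrow> complex \<Rightarrow> complex"

inductive_set poly4 :: "pfun4 set" where
  const: "(\<lambda>x y s t. c) \<in> poly4"
| varX: "(\<lambda>x y s t. x) \<in> poly4"
| varY: "(\<lambda>x y s t. y) \<in> poly4"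
| varS: "(\<lambda>x y s t. s) \<in> poly4"
| varT: "(\<lambda>x y s t. t) \<in> poly4"
| add: "f \<in> poly4 \<Longrightarrow> g \<in> poly4 \<Longrightarrow> (\<lambda>x y s t. f x y s t + g x y s t) \<in> poly4"
| mult: "f \<in> poly4 \<Longrightarrow> g \<in> poly4 \<Longrightarrow> (\<lambda>x y s t. f x y s t * g x y s t) \<in> poly4"

text \<open>Action of G on Omega(l1,e1,s1,0) (x) Omega(l2,e2,0,s2): x(v(x)w) = xv(x)w + v(x)xw.\<close>

definition actL :: "complex \<Rightarrow> complex \<Rightarrow> complex \<Rightarrow> complex \<Rightarrow> int \<Rightarrow> pfun4 \<Rightarrow> pfun4" where
  "actL l1 e1 l2 e2 m F = (\<lambda>x y s t.
     l1 powi m * (y - of_int m * x + of_int m * e1) * F x (y - of_int m) s t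
   + l2 powi m * (t + of_int m * s + of_int m * e2) * F x y s (t - of_int m))"

definition actH :: "complex \<Rightarrow> complex \<Rightarrow> int \<Rightarrow> pfun4 \<Rightarrow> pfun4" where
  "actH l1 l2 m F = (\<lambda>x y s t.
     l1 powi m * x * F x (y - of_int m) s t
   + l2 powi m * s * F x y s (t - of_int m))"

definition actI :: "complex \<Rightarrow> complex \<Rightarrow> int \<Rightarrow> pfun4 \<Rightarrow> pfun4" where
  "actI l1 s1 m F = (\<lambda>x y s t. l1 powi m * s1 * F (x - 1) (y - of_int m) s t + 0)"

definition actJ :: "complex \<Rightarrow> complex \<Rightarrow> int \<Rightarrow> pfun4 \<Rightarrow> pfun4" where
  "actJ l2 s2 m F = (\<lambda>x y s t. 0 + l2 powi m * s2 * F x y (s + 1) (t - of_int m))"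

inductive_set gen_submod ::
  "complex \<Rightarrow> complex \<Rightarrow> complex \<Rightarrow> complex \<Rightarrow> complex \<Rightarrow> complex \<Rightarrow> pfun4 \<Rightarrow> pfun4 set"
  for l1 e1 s1 l2 e2 s2 :: complex and v :: pfun4 where
  base: "v \<in> gen_submod l1 e1 s1 l2 e2 s2 v"
| zero: "(\<lambda>x y s t. 0) \<in> gen_submod l1 e1 s1 l2 e2 s2 v"
| add: "F \<in> gen_submod l1 e1 s1 l2 e2 s2 v \<Longrightarrow> G \<in> gen_submod l1 e1 s1 l2 e2 s2 v \<Longrightarrow>
        (\<lambda>x y s t. F x y s t + G x y s t) \<in> gen_submod l1 e1 s1 l2 e2 s2 v"
| smult: "F \<in> gen_submod l1 e1 s1 l2 e2 s2 v \<Longrightarrow>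
        (\<lambda>x y s t. c * F x y s t) \<in> gen_submod l1 e1 s1 l2 e2 s2 v"
| L: "F \<in> gen_submod l1 e1 s1 l2 e2 s2 v \<Longrightarrow> actL l1 e1 l2 e2 m F \<in> gen_submod l1 e1 s1 l2 e2 s2 v"
| H: "F \<in> gen_submod l1 e1 s1 l2 e2 s2 v \<Longrightarrow> actH l1 l2 m F \<in> gen_submod l1 e1 s1 l2 e2 s2 v"
| I: "F \<in> gen_submod l1 e1 s1 l2 e2 s2 v \<Longrightarrow> actI l1 s1 m F \<in> gen_submod l1 e1 s1 l2 e2 s2 v"
| J: "F \<in> gen_submod l1 e1 s1 l2 e2 s2 v \<Longrightarrow> actJ l2 s2 m F \<in> gen_submod l1 e1 s1 l2 e2 s2 v"

end

theory Submission
  imports Defs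
begin

inductive pd :: "nat \<Rightarrow> pfun4 \<Rightarrow> bool" where
  pc: "pd n (\<lambda>x y s t. c)"
| px: "pd n F \<Longrightarrow> pd n (\<lambda>x y s t. x * F x y s t)"
| ps: "pd n F \<Longrightarrow> pd n (\<lambda>x y s t. s * F x y s t)"
| py: "pd n F \<Longrightarrow> pd (Suc n) (\<lambda>x y s t. y * F x y s t)"
| pt: "pd n F \<Longrightarrow> pd (Suc n) (\<lambda>x y s t. t * F x y s t)"
| padd: "pd n F \<Longrightarrow> pd n G \<Longrightarrow> pd n (\<lambda>x y s t. F x y s t + G x y s t)"
| psm: "pd n F \<Longrightarrow> pd n (\<lambda>x y s t. c * F x y s t)"
| pmono: "pd n F \<Longrightarrow> pd (Suc n) F"

lemma pd_cong: "pd n F \<Longrightarrow> F = G \<Longrightarrow> pd n G" by simp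

lemma pd_le: "pd m G \<Longrightarrow> m \<le> k \<Longrightarrow> pd k G"
  by (induction k) (auto simp: le_Suc_eq intro: pmono)

lemma pd_mult: "pd n F \<Longrightarrow> pd m G \<Longrightarrow> pd (n+m) (\<lambda>x y s t. F x y s t * G x y s t)"
proof (induction rule: pd.induct)
  case (pc n c)
  then show ?case by (intro pd_le[OF psm[OF pc(1)]]) auto
next
  case (px n F)
  then have "pd (n+m) (\<lambda>x y s t. F x y s t * G x y s t)" by blast
  from pd.px[OF this] show ?case by (simp add: mult.assoc)
next
  case (ps n F)
  then have "pd (n+m) (\<lambda>x y s t. F x y s t * G x y s t)" by blast
  from pd.ps[OF this] show ?case by (simp add: mult.assoc)
next
  case (py n F)
  then have "pd (n+m) (\<lambda>x y s t. F x y s t * G x y s t)" by blast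
  from pd.py[OF this] show ?case by (simp add: mult.assoc)
next
  case (pt n F)
  then have "pd (n+m) (\<lambda>x y s t. F x y s t * G x y s t)" by blast
  from pd.pt[OF this] show ?case by (simp add: mult.assoc)
next
  case (padd n F F')
  then have "pd (n+m) (\<lambda>x y s t. F x y s t * G x y s t)" "pd (n+m) (\<lambda>x y s t. F' x y s t * G x y s t)" by blast+
  from pd.padd[OF this] show ?case by (simp add: distrib_right)
next
  case (psm n F c)
  then have "pd (n+m) (\<lambda>x y s t. F x y s t * G x y s t)" by blast
  from pd.psm[OF this] show ?case by (simp add: mult.assoc)
next
  case (pmono n F)
  then show ?case by (auto intro!: pd.pmono)
qed

lemma poly4_pd: "F \<in> poly4 \<Longrightarrow> \<exists>n. pd n F"
proof (induction rule: poly4.induct)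
  case (const c) then show ?case using pc by blast
next
  case varX then show ?case using px[OF pc[of 0 1]] by auto
next
  case varY then show ?case using py[OF pc[of 0 1]] by auto
next
  case varS then show ?case using ps[OF pc[of 0 1]] by auto
next
  case varT then show ?case using pt[OF pc[of 0 1]] by auto
next
  case (add f g)
  then obtain a b where "pd a f" "pd b g" by blast
  then show ?case using padd[OF pd_le[of a f "a+b"] pd_le[of b g "a+b"]] by auto
next
  case (mult f g)
  then obtain a b where "pd a f" "pd b g" by blast
  then show ?case using pd_mult by blast
qed

lemma poly4_shift: "F \<in> poly4 \<Longrightarrow> (\<lambda>x y s t. F (x - a) (y - b) (s + c) (t - d)) \<in> poly4"
proof (induction rule: poly4.induct)
  case (const c) then show ?case by (rule poly4.const)
next
  case varX then show ?case using poly4.add[OF poly4.varX poly4.const[of "-a"]] by simp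
next
  case varY then show ?case using poly4.add[OF poly4.varY poly4.const[of "-b"]] by simp
next
  case varS then show ?case using poly4.add[OF poly4.varS poly4.const[of "c"]] by simp
next
  case varT then show ?case using poly4.add[OF poly4.varT poly4.const[of "-d"]] by simp
next
  case (add f g) then show ?case using poly4.add[OF add.IH] by simp
next
  case (mult f g) then show ?case using poly4.mult[OF mult.IH] by simp
qed

lemma poly4_cong: "F \<in> poly4 \<Longrightarrow> F = G \<Longrightarrow> G \<in> poly4" by simp

lemma poly4_lin: "(\<lambda>x y s t. a*x + b*y + c*s + d*t + e) \<in> poly4"
proof -
  have "(\<lambda>x y s t. (\<lambda>x y s t. (\<lambda>x y s t. (\<lambda>x y s t. a*x + b*y) x y s t + c*s) x y s t + d*t) x y s t + e) \<in> poly4"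
    by (intro poly4.add poly4.mult poly4.const poly4.varX poly4.varY poly4.varS poly4.varT)
  then show ?thesis by simp
qed

lemma poly4_comb: "F \<in> poly4 \<Longrightarrow> G \<in> poly4 \<Longrightarrow>
  (\<lambda>x y s t. (a*x + b*y + c*s + d*t + e) * F x y s t + (a'*x + b'*y + c'*s + d'*t + e') * G x y s t) \<in> poly4"
  using poly4.add[OF poly4.mult[OF poly4_lin[of a b c d e]] poly4.mult[OF poly4_lin[of a' b' c' d' e']]] by simp

lemma submod_poly4:
  "F \<in> gen_submod l1 e1 s1 l2 e2 s2 (\<lambda>x y s t. 1) \<Longrightarrow> F \<in> poly4"
proof (induction rule: gen_submod.induct)
  case base then show ?case by (rule poly4.const)
next
  case zero then show ?case by (rule poly4.const)
next
  case (add F G) then show ?case using poly4.add[OF add.IH] by simp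
next
  case (smult F c) then show ?case using poly4.mult[OF poly4.const smult.IH] by simp
next
  case (L F m)
  have a: "(\<lambda>x y s t. F x (y - of_int m) s t) \<in> poly4"
    using poly4_shift[OF L(2), of 0 "of_int m" 0 0] by simp
  have b: "(\<lambda>x y s t. F x y s (t - of_int m)) \<in> poly4"
    using poly4_shift[OF L(2), of 0 0 0 "of_int m"] by simp
  show ?case
    using poly4_comb[OF a b, of "-(l1 powi m) * of_int m" "l1 powi m" 0 0 "l1 powi m * of_int m * e1"
       0 0 "l2 powi m * of_int m" "l2 powi m" "l2 powi m * of_int m * e2"]
    unfolding actL_def by (simp add: algebra_simps)
next
  case (H F m)
  have a: "(\<lambda>x y s t. F x (y - of_int m) s t) \<in> poly4"
    using poly4_shift[OF H(2), of 0 "of_int m" 0 0] by simp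
  have b: "(\<lambda>x y s t. F x y s (t - of_int m)) \<in> poly4"
    using poly4_shift[OF H(2), of 0 0 0 "of_int m"] by simp
  show ?case
    using poly4_comb[OF a b, of "l1 powi m" 0 0 0 0 0 0 "l2 powi m" 0 0]
    unfolding actH_def by (simp add: algebra_simps)
next
  case (I F m)
  have a: "(\<lambda>x y s t. F (x - 1) (y - of_int m) s t) \<in> poly4"
    using poly4_shift[OF I(2), of 1 "of_int m" 0 0] by simp
  show ?case
    using poly4_comb[OF a a, of 0 0 0 0 "l1 powi m * s1" 0 0 0 0 0]
    unfolding actI_def by (simp add: algebra_simps)
next
  case (J F m)
  have a: "(\<lambda>x y s t. F x y (s + 1) (t - of_int m)) \<in> poly4"
    using poly4_shift[OF J(2), of 0 0 1 "of_int m"] by simp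
  show ?case
    using poly4_comb[OF a a, of 0 0 0 0 "l2 powi m * s2" 0 0 0 0 0]
    unfolding actJ_def by (simp add: algebra_simps)
qed

lemma pd_dY: "pd n G \<Longrightarrow> pd (n-1) (\<lambda>x y s t. G x (y-1) s t - G x y s t) \<and>
   (n = 0 \<longrightarrow> (\<forall>x y s t. G x (y-1) s t = G x y s t))"
proof (induction rule: pd.induct)
  case (pc n c) then show ?case using pd.pc[of _ 0] by simp
next
  case (px n F)
  then show ?case using pd.px[of "n-1" "\<lambda>x y s t. F x (y-1) s t - F x y s t"]
    by (simp add: algebra_simps)
next
  case (ps n F)
  then show ?case using pd.ps[of "n-1" "\<lambda>x y s t. F x (y-1) s t - F x y s t"]
    by (simp add: algebra_simps)
next
  case (py n F)
  show ?case
  proof (cases n)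
    case 0
    then have "pd n (\<lambda>x y s t. (-1) * F x y s t)" using pd.psm[OF py(1)] by blast
    then show ?thesis using py 0 by (simp add: algebra_simps)
  next
    case (Suc k)
    have d: "pd k (\<lambda>x y s t. F x (y-1) s t - F x y s t)" using py Suc by simp
    have "pd n (\<lambda>x y s t. y * (F x (y-1) s t - F x y s t) + (-1) * (F x y s t + (F x (y-1) s t - F x y s t)))"
    proof -
      have d': "pd n (\<lambda>x y s t. F x (y-1) s t - F x y s t)" using pd.pmono[OF d] Suc by simp
      have d'': "pd n (\<lambda>x y s t. y * (F x (y-1) s t - F x y s t))" using pd.py[OF d] Suc by simp
      show ?thesis using pd.padd[OF d'' pd.psm[OF pd.padd[OF py(1) d'], where c="-1"]] by simp
    qed
    then show ?thesis by (simp add: algebra_simps)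
  qed
next
  case (pt n F)
  show ?case
  proof (cases n)
    case 0
    then show ?thesis using py pt pd.pc[of 0 0] by (simp add: algebra_simps)
  next
    case (Suc k)
    have d: "pd k (\<lambda>x y s t. F x (y-1) s t - F x y s t)" using pt Suc by simp
    then show ?thesis using pd.pt[OF d] Suc by (simp add: algebra_simps)
  qed
next
  case (padd n F G)
  then show ?case using pd.padd[of "n-1" "\<lambda>x y s t. F x (y-1) s t - F x y s t" "\<lambda>x y s t. G x (y-1) s t - G x y s t"]
    by (simp add: algebra_simps)
next
  case (psm n F c)
  then show ?case using pd.psm[of "n-1" "\<lambda>x y s t. F x (y-1) s t - F x y s t" c]
    by (simp add: algebra_simps)
next
  case (pmono n F)
  then show ?case using pd_le[of "n-1" _ n] by auto
qed


lemma pd_dT: "pd n G \<Longrightarrow> pd (n-1) (\<lambda>x y s t. G x y s (t-1) - G x y s t) \<and>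
   (n = 0 \<longrightarrow> (\<forall>x y s t. G x y s (t-1) = G x y s t))"
proof (induction rule: pd.induct)
  case (pc n c) then show ?case using pd.pc[of _ 0] by simp
next
  case (px n F)
  then show ?case using pd.px[of "n-1" "\<lambda>x y s t. F x y s (t-1) - F x y s t"]
    by (simp add: algebra_simps)
next
  case (ps n F)
  then show ?case using pd.ps[of "n-1" "\<lambda>x y s t. F x y s (t-1) - F x y s t"]
    by (simp add: algebra_simps)
next
  case (py n F)
  show ?case
  proof (cases n)
    case 0
    then show ?thesis using py pd.pc[of 0 0] by (simp add: algebra_simps)
  next
    case (Suc k)
    have d: "pd k (\<lambda>x y s t. F x y s (t-1) - F x y s t)" using py Suc by simp
    then show ?thesis using pd.py[OF d] Suc by (simp add: algebra_simps)
  qed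
  case (pt n F)
  show ?case
  proof (cases n)
    case 0
    then have "pd n (\<lambda>x y s t. (-1) * F x y s t)" using pd.psm[OF pt(1)] by blast
    then show ?thesis using pt 0 by (simp add: algebra_simps)
  next
    case (Suc k)
    have d: "pd k (\<lambda>x y s t. F x y s (t-1) - F x y s t)" using pt Suc by simp
    have "pd n (\<lambda>x y s t. t * (F x y s (t-1) - F x y s t) + (-1) * (F x y s t + (F x y s (t-1) - F x y s t)))"
    proof -
      have d': "pd n (\<lambda>x y s t. F x y s (t-1) - F x y s t)" using pd.pmono[OF d] Suc by simp
      have d'': "pd n (\<lambda>x y s t. t * (F x y s (t-1) - F x y s t))" using pd.pt[OF d] Suc by simp
      show ?thesis using pd.padd[OF d'' pd.psm[OF pd.padd[OF pt(1) d'], where c="-1"]] by simp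
    qed
    then show ?thesis by (simp add: algebra_simps)
  qed
next
next
  case (padd n F G)
  then show ?case using pd.padd[of "n-1" "\<lambda>x y s t. F x y s (t-1) - F x y s t" "\<lambda>x y s t. G x y s (t-1) - G x y s t"]
    by (simp add: algebra_simps)
next
  case (psm n F c)
  then show ?case using pd.psm[of "n-1" "\<lambda>x y s t. F x y s (t-1) - F x y s t" c]
    by (simp add: algebra_simps)
next
  case (pmono n F)
  then show ?case using pd_le[of "n-1" _ n] by auto
qed


lemma pd_shiftY: assumes "pd n G" shows "pd n (\<lambda>x y s t. G x (y-1) s t)"
proof -
  have "pd n (\<lambda>x y s t. G x (y-1) s t - G x y s t)"
    using pd_le[of "n-1" _ n] pd_dY[OF assms] by auto
  from pd.padd[OF assms this] show ?thesis by simp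
qed

lemma pd_shiftT: assumes "pd n G" shows "pd n (\<lambda>x y s t. G x y s (t-1))"
proof -
  have "pd n (\<lambda>x y s t. G x y s (t-1) - G x y s t)"
    using pd_le[of "n-1" _ n] pd_dT[OF assms] by auto
  from pd.padd[OF assms this] show ?thesis by simp
qed

lemma pd_yD: "pd n G \<Longrightarrow> pd n (\<lambda>x y s t. y * (G x (y-1) s t - G x y s t))"
proof (cases n)
  case 0
  assume "pd n G" then show ?thesis using pd_dY[of n G] 0 pd.pc[of 0 0] by simp
next
  case (Suc k)
  assume "pd n G" then show ?thesis using pd_dY[of n G] Suc pd.py by fastforce
qed

lemma pd_tD: "pd n G \<Longrightarrow> pd n (\<lambda>x y s t. t * (G x y s (t-1) - G x y s t))"
proof (cases n)
  case 0
  assume "pd n G" then show ?thesis using pd_dT[of n G] 0 pd.pc[of 0 0] by simp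
next
  case (Suc k)
  assume "pd n G" then show ?thesis using pd_dT[of n G] Suc pd.pt by fastforce
qed


lemma comb_gen: "(a::complex) \<noteq> 0 \<Longrightarrow> X + p * Y = a * Z \<Longrightarrow> (1/a) * X + (p/a) * Y = Z"
proof -
  assume h: "a \<noteq> 0" and e: "X + p * Y = a * Z"
  have "a * ((1/a) * X + (p/a) * Y) = a * (1/a) * X + a * (p/a) * Y" by (simp only: distrib_left mult.assoc)
  also have "\<dots> = X + p * Y" using h by simp
  also have "\<dots> = a * Z" by (rule e)
  finally show ?thesis using h by simp
qed
lemma comb1: "(a::complex) \<noteq> b \<Longrightarrow> (1/(a-b)) * (a*u + b*v) + (-b/(a-b)) * (u+v) = u"
  by (rule comb_gen) (simp_all add: algebra_simps)
lemma comb2: "(a::complex) \<noteq> b \<Longrightarrow> (1/(b-a)) * (a*u + b*v) + (-a/(b-a)) * (u+v) = v"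
  by (rule comb_gen) (simp_all add: algebra_simps)

lemma comb1': "(a::complex) \<noteq> b \<Longrightarrow> (1/(a-b)) * (1*(d + a*y*g + b*t*g) + (-1)*d) + (-b/(a-b))*(y*g + t*g) = y*g"
proof -
  assume h: "a \<noteq> b"
  have e: "1*(d + a*y*g + b*t*g) + (-1)*d = a*(y*g) + b*(t*g)" by (simp add: algebra_simps)
  show ?thesis unfolding e by (rule comb1[OF h])
qed

lemma comb2': "(a::complex) \<noteq> b \<Longrightarrow> (1/(b-a)) * (1*(d + a*y*g + b*t*g) + (-1)*d) + (-a/(b-a))*(y*g + t*g) = t*g"
proof -
  assume h: "a \<noteq> b"
  have e: "1*(d + a*y*g + b*t*g) + (-1)*d = a*(y*g) + b*(t*g)" by (simp add: algebra_simps)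
  show ?thesis unfolding e by (rule comb2[OF h])
qed

locale setup4 =
  fixes l1 e1 s1 l2 e2 s2 :: complex
  assumes l1: "l1 \<noteq> 0" and l2: "l2 \<noteq> 0" and l12: "l1 \<noteq> l2"
begin

abbreviation "M \<equiv> gen_submod l1 e1 s1 l2 e2 s2 (\<lambda>x y s t. 1)"

lemma M_cong: "F \<in> M \<Longrightarrow> F = G \<Longrightarrow> G \<in> M" by simp

lemma M_const: "(\<lambda>x y s t. c) \<in> M"
proof -
  have "(\<lambda>x y s t. c * (\<lambda>x y s t. 1::complex) x y s t) \<in> M"
    by (rule gen_submod.smult[OF gen_submod.base])
  then show ?thesis by simp
qed

lemma M_lin: "F \<in> M \<Longrightarrow> G \<in> M \<Longrightarrow> (\<lambda>x y s t. a * F x y s t + b * G x y s t) \<in> M"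
  by (intro gen_submod.add gen_submod.smult)

lemma M_X1: "(\<lambda>x y s t. x) \<in> M"
proof -
  have h0: "actH l1 l2 0 (\<lambda>x y s t. 1) \<in> M" "actH l1 l2 1 (\<lambda>x y s t. 1) \<in> M"
    by (intro gen_submod.H gen_submod.base)+
  have "(\<lambda>x y s t. (1/(l1-l2)) * actH l1 l2 1 (\<lambda>x y s t. 1) x y s t + (- l2/(l1-l2)) * actH l1 l2 0 (\<lambda>x y s t. 1) x y s t) \<in> M"
    using M_lin[OF h0(2) h0(1)] by blast
  moreover have "(\<lambda>x y s t. (1/(l1-l2)) * actH l1 l2 1 (\<lambda>x y s t. 1) x y s t + (- l2/(l1-l2)) * actH l1 l2 0 (\<lambda>x y s t. 1) x y s t) = (\<lambda>x y s t. x)"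
    apply (simp only: fun_eq_iff actH_def power_int_1_right power_int_0_right mult_1_right mult_1_left)
    using comb1[OF l12] by blast
  ultimately show ?thesis by simp
qed

lemma M_S1: "(\<lambda>x y s t. s) \<in> M"
proof -
  have h0: "actH l1 l2 0 (\<lambda>x y s t. 1) \<in> M" "actH l1 l2 1 (\<lambda>x y s t. 1) \<in> M"
    by (intro gen_submod.H gen_submod.base)+
  have "(\<lambda>x y s t. (1/(l2-l1)) * actH l1 l2 1 (\<lambda>x y s t. 1) x y s t + (- l1/(l2-l1)) * actH l1 l2 0 (\<lambda>x y s t. 1) x y s t) \<in> M"
    using M_lin[OF h0(2) h0(1)] by blast
  moreover have "(\<lambda>x y s t. (1/(l2-l1)) * actH l1 l2 1 (\<lambda>x y s t. 1) x y s t + (- l1/(l2-l1)) * actH l1 l2 0 (\<lambda>x y s t. 1) x y s t) = (\<lambda>x y s t. s)"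
    apply (simp only: fun_eq_iff actH_def power_int_1_right power_int_0_right mult_1_right mult_1_left)
    using comb2[OF l12] by blast
  ultimately show ?thesis by simp
qed

lemma M_X: "F \<in> M \<Longrightarrow> (\<lambda>x y s t. x * F x y s t) \<in> M"
proof (induction rule: gen_submod.induct)
  case base then show ?case using M_X1 by simp
next
  case zero then show ?case using gen_submod.zero by simp
next
  case (add F G) then show ?case using gen_submod.add[OF add.IH] by (simp add: algebra_simps)
next
  case (smult F c) then show ?case using gen_submod.smult[OF smult.IH, of c] by (simp add: algebra_simps)
next
  case (L F m) then show ?case using gen_submod.L[OF L.IH, of m] by (simp add: actL_def algebra_simps)
next
  case (H F m) then show ?case using gen_submod.H[OF H.IH, of m] by (simp add: actH_def algebra_simps)
next
  case (J F m) then show ?case using gen_submod.J[OF J.IH, of m] by (simp add: actJ_def algebra_simps)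
next
  case (I F m)
  have "(\<lambda>x y s t. actI l1 s1 m (\<lambda>x y s t. x * F x y s t) x y s t + actI l1 s1 m F x y s t) \<in> M"
    using gen_submod.add[OF gen_submod.I[OF I.IH] gen_submod.I[OF I.hyps]] by blast
  then show ?case by (simp add: actI_def algebra_simps)
qed

lemma M_S: "F \<in> M \<Longrightarrow> (\<lambda>x y s t. s * F x y s t) \<in> M"
proof (induction rule: gen_submod.induct)
  case base then show ?case using M_S1 by simp
next
  case zero then show ?case using gen_submod.zero by simp
next
  case (add F G) then show ?case using gen_submod.add[OF add.IH] by (simp add: algebra_simps)
next
  case (smult F c) then show ?case using gen_submod.smult[OF smult.IH, of c] by (simp add: algebra_simps)
next
  case (L F m) then show ?case using gen_submod.L[OF L.IH, of m] by (simp add: actL_def algebra_simps)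
next
  case (H F m) then show ?case using gen_submod.H[OF H.IH, of m] by (simp add: actH_def algebra_simps)
next
  case (I F m) then show ?case using gen_submod.I[OF I.IH, of m] by (simp add: actI_def algebra_simps)
next
  case (J F m)
  have "(\<lambda>x y s t. actJ l2 s2 m (\<lambda>x y s t. s * F x y s t) x y s t + (-1) * actJ l2 s2 m F x y s t) \<in> M"
    using M_lin[OF gen_submod.J[OF J.IH, of m] gen_submod.J[OF J.hyps, of m], of 1 "-1"] by simp
  then show ?case by (simp add: actJ_def algebra_simps)
qed


lemma key:
  assumes all: "\<And>G. pd n G \<Longrightarrow> G \<in> M" and G: "pd n G"
  shows "(\<lambda>x y s t. y * G x y s t) \<in> M" "(\<lambda>x y s t. t * G x y s t) \<in> M"
proof -
  define D where "D = (\<lambda>x y s t. (l1 * (y * (G x (y-1) s t - G x y s t)) + l1 * (e1 * G x (y-1) s t) + (-l1) * (x * G x (y-1) s t))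
     + (l2 * (t * (G x y s (t-1) - G x y s t)) + l2 * (e2 * G x y s (t-1)) + l2 * (s * G x y s (t-1))))"
  have gy: "pd n (\<lambda>x y s t. G x (y-1) s t)" by (rule pd_shiftY[OF G])
  have gt: "pd n (\<lambda>x y s t. G x y s (t-1))" by (rule pd_shiftT[OF G])
  have "pd n D" unfolding D_def
    by (intro pd.padd pd.psm pd.px pd.ps pd_yD pd_tD G gy gt)
  then have DM: "D \<in> M" by (rule all)
  have A1: "actL l1 e1 l2 e2 1 G \<in> M" and A0: "actL l1 e1 l2 e2 0 G \<in> M"
    using gen_submod.L[OF all[OF G]] by blast+
  have eq1: "\<And>x y s t. actL l1 e1 l2 e2 1 G x y s t = D x y s t + l1*y*G x y s t + l2*t*G x y s t"
    by (simp add: actL_def D_def algebra_simps)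
  have eq0: "\<And>x y s t. actL l1 e1 l2 e2 0 G x y s t = y*G x y s t + t*G x y s t"
    by (simp add: actL_def algebra_simps)
  have d: "l1 - l2 \<noteq> 0" "l2 - l1 \<noteq> 0" using l12 by auto
  have A1D: "(\<lambda>x y s t. 1 * actL l1 e1 l2 e2 1 G x y s t + (-1) * D x y s t) \<in> M"
    by (rule M_lin[OF A1 DM])
  have m1: "(\<lambda>x y s t. (1/(l1-l2)) * (1 * actL l1 e1 l2 e2 1 G x y s t + (-1) * D x y s t)
      + (-l2/(l1-l2)) * actL l1 e1 l2 e2 0 G x y s t) \<in> M"
    by (rule M_lin[OF A1D A0])
  show "(\<lambda>x y s t. y * G x y s t) \<in> M"
    apply (rule M_cong[OF m1])
    apply (simp only: eq1 eq0 fun_eq_iff)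
    using comb1'[OF l12] by blast
  have m2: "(\<lambda>x y s t. (1/(l2-l1)) * (1 * actL l1 e1 l2 e2 1 G x y s t + (-1) * D x y s t)
      + (-l1/(l2-l1)) * actL l1 e1 l2 e2 0 G x y s t) \<in> M"
    by (rule M_lin[OF A1D A0])
  show "(\<lambda>x y s t. t * G x y s t) \<in> M"
    apply (rule M_cong[OF m2])
    apply (simp only: eq1 eq0 fun_eq_iff)
    using comb2'[OF l12] by blast
qed

lemma pd_M_step: "pd n F \<Longrightarrow> (\<forall>m<n. \<forall>G. pd m G \<longrightarrow> G \<in> M) \<Longrightarrow> F \<in> M"
proof (induction rule: pd.induct)
  case (pc n c) show ?case by (rule M_const)
next
  case (px n F) then show ?case using M_X by blast
next
  case (ps n F) then show ?case using M_S by blast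
next
  case (py n F) then show ?case using key(1)[of n F] by blast
next
  case (pt n F) then show ?case using key(2)[of n F] by blast
next
  case (padd n F G) then show ?case using gen_submod.add by blast
next
  case (psm n F c) then show ?case using gen_submod.smult by blast
next
  case (pmono n F) then show ?case by blast
qed

lemma pd_M: "pd n F \<Longrightarrow> F \<in> M"
proof (induction n arbitrary: F rule: less_induct)
  case (less n) then show ?case using pd_M_step by blast
qed

lemma poly4_M: "F \<in> poly4 \<Longrightarrow> F \<in> M"
  using poly4_pd pd_M by blast

end

theorem proposition3p2:
  fixes l1 l2 s1 s2 e1 e2 :: complex
  assumes "l1 \<noteq> 0" "l2 \<noteq> 0" "s1 \<noteq> 0" "s2 \<noteq> 0" "l1 \<noteq> l2"
  shows "gen_submod l1 e1 s1 l2 e2 s2 (\<lambda>x y s t. 1) = poly4"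
proof -
  interpret setup4 l1 e1 s1 l2 e2 s2 using assms by unfold_locales auto
  show ?thesis using poly4_M submod_poly4 by blast
qed

end
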